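(* Let $\epsilon>0$, $y\in\mathbb R^d$, and for $i\in[k]$ let $a_i\in\mathbb R^d$ and $b_i>0$. Consider the feasibility problem of finding $\tilde y\in\mathbb R^d$ with $\|\tilde y-y\|_\infty\le\epsilon$ and $\|\tilde y-a_i\|_\infty\ge b_i$ for all $i\in[k]$. For $j\in[d]$ and $t\in\mathbb R$ let $S_j(t)=\{i\in[k]: |t-a_{i,j}|\ge b_i\}$. Then: (1) if $\tilde y$ satisfies $\|\tilde y-y\|_\infty\le\epsilon$ and $\bigcup_{j=1}^d S_j(\tilde y_j)=[k]$, then $\tilde y$ is a solution of the feasibility problem; (2) for $j\in[d]$ let $P_j=\bigcup_{i=1}^k\big(\{a_{i,j}-b_i,\,a_{i,j}+b_i\}\cap[y_j-\epsilon,y_j+\epsilon]\big)$, or $P_j=\{y_j\}$ if this set is empty, and let $P=\{p\in\mathbb R^d: p_j\in P_j \text{ for all } j\in[d]\}$; then if the feasibility problem has a solution, $P$ contains a solution. *)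

theory Defs
  imports "HOL-Analysis.Analysis"
begin

definition feasible_sol :: "real \<Rightarrow> real^'d \<Rightarrow> (nat \<Rightarrow> real^'d) \<Rightarrow> (nat \<Rightarrow> real) \<Rightarrow> nat \<Rightarrow> real^'d \<Rightarrow> bool" where
  "feasible_sol eps y a b k yt \<longleftrightarrow>
     infnorm (yt - y) \<le> eps \<and> (\<forall>i\<in>{1..k}. infnorm (yt - a i) \<ge> b i)"

definition S_set :: "(nat \<Rightarrow> real^'d) \<Rightarrow> (nat \<Rightarrow> real) \<Rightarrow> nat \<Rightarrow> 'd \<Rightarrow> real \<Rightarrow> nat set" where
  "S_set a b k j t = {i\<in>{1..k}. \<bar>t - a i $ j\<bar> \<ge> b i}"

definition P_coord :: "real \<Rightarrow> real^'d \<Rightarrow> (nat \<Rightarrow> real^'d) \<Rightarrow> (nat \<Rightarrow> real) \<Rightarrow> nat \<Rightarrow> 'd \<Rightarrow> real set" where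
  "P_coord eps y a b k j =
     (let Q = (\<Union>i\<in>{1..k}. {a i $ j - b i, a i $ j + b i} \<inter> {y $ j - eps .. y $ j + eps})
      in if Q = {} then {y $ j} else Q)"

definition P_grid :: "real \<Rightarrow> real^'d \<Rightarrow> (nat \<Rightarrow> real^'d) \<Rightarrow> (nat \<Rightarrow> real) \<Rightarrow> nat \<Rightarrow> (real^'d) set" where
  "P_grid eps y a b k = {p. \<forall>j. p $ j \<in> P_coord eps y a b k j}"

end

theory Submission
  imports Defs
begin

lemma infnorm_attained: "\<exists>j. infnorm (x::real^'n) = \<bar>x$j\<bar>"
proof -
  have "infnorm x = Sup ((\<lambda>i. \<bar>x$i\<bar>) ` UNIV)"
    unfolding infnorm_cart by (metis Setcompr_eq_image)
  also have "\<dots> = Max ((\<lambda>i. \<bar>x$i\<bar>) ` UNIV)"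
    by (rule cSup_eq_Max) auto
  finally have "infnorm x \<in> (\<lambda>i. \<bar>x$i\<bar>) ` UNIV"
    using Max_in[of "(\<lambda>i. \<bar>x$i\<bar>) ` UNIV"] by auto
  then show ?thesis by auto
qed

lemma infnorm_le_cart: "infnorm (x::real^'n) \<le> e \<longleftrightarrow> (\<forall>j. \<bar>x$j\<bar> \<le> e)"
  by (metis component_le_infnorm_cart infnorm_attained order_trans)

lemma coord_choice:
  fixes E :: "real set"
  assumes fin: "finite E" and t: "\<bar>t - c\<bar> \<le> eps"
  shows "\<exists>p. p \<in> (if E \<inter> {c-eps..c+eps} = {} then {c} else E \<inter> {c-eps..c+eps})
      \<and> (\<forall>e\<in>E. \<not>(p<e \<and> e\<le>t) \<and> \<not>(t\<le>e \<and> e<p))"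
proof (cases "E \<inter> {c-eps..c+eps} = {}")
  case True
  show ?thesis
  proof (intro exI[of _ c] conjI)
    show "c \<in> (if E \<inter> {c-eps..c+eps} = {} then {c} else E \<inter> {c-eps..c+eps})"
      using True by simp
    show "\<forall>e\<in>E. \<not>(c<e \<and> e\<le>t) \<and> \<not>(t\<le>e \<and> e<c)"
    proof
      fix e assume "e \<in> E"
      then have "e \<notin> {c-eps..c+eps}" using True by auto
      then show "\<not>(c<e \<and> e\<le>t) \<and> \<not>(t\<le>e \<and> e<c)" using t by auto
    qed
  qed
next
  case False
  define Q where "Q = E \<inter> {c-eps..c+eps}"
  have finQ: "finite Q" using fin Q_def by simp
  show ?thesis
  proof (cases "Q \<inter> {..t} = {}")
    case True
    define p where "p = Min Q"
    have "Q \<noteq> {}" using False Q_def by simp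
    then have pQ: "p \<in> Q" using Min_in[OF finQ] p_def by blast
    have "\<forall>e\<in>E. \<not>(p<e \<and> e\<le>t) \<and> \<not>(t\<le>e \<and> e<p)"
    proof
      fix e assume eE: "e \<in> E"
      have ple: "p > t" using pQ True by auto
      show "\<not>(p<e \<and> e\<le>t) \<and> \<not>(t\<le>e \<and> e<p)"
      proof
        show "\<not>(p<e \<and> e\<le>t)" using ple by auto
        show "\<not>(t\<le>e \<and> e<p)"
        proof
          assume h: "t\<le>e \<and> e<p"
          have "p \<le> c+eps" using pQ Q_def by auto
          then have "e \<in> Q" using h t eE Q_def by auto
          then have "p \<le> e" using finQ p_def by simp
          then show False using h by simp
        qed
      qed
    qed
    then show ?thesis using pQ False Q_def by (intro exI[of _ p]) auto
  next
    case False2: False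
    define p where "p = Max (Q \<inter> {..t})"
    have pQ: "p \<in> Q \<inter> {..t}" using False2 Max_in[of "Q \<inter> {..t}"] finQ p_def by blast
    have "\<forall>e\<in>E. \<not>(p<e \<and> e\<le>t) \<and> \<not>(t\<le>e \<and> e<p)"
    proof
      fix e assume eE: "e \<in> E"
      show "\<not>(p<e \<and> e\<le>t) \<and> \<not>(t\<le>e \<and> e<p)"
      proof
        show "\<not>(t\<le>e \<and> e<p)" using pQ by auto
        show "\<not>(p<e \<and> e\<le>t)"
        proof
          assume h: "p<e \<and> e\<le>t"
          have "p \<ge> c-eps" using pQ Q_def by auto
          then have "e \<in> Q \<inter> {..t}" using h t eE Q_def by auto
          then have "e \<le> p" using finQ p_def by simp
          then show False using h by simp
        qed
      qed
    qed
    then show ?thesis using pQ False Q_def by (intro exI[of _ p]) auto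
  qed
qed

theorem lemma4:
  fixes eps :: real and y :: "real^'d" and a :: "nat \<Rightarrow> real^'d"
    and b :: "nat \<Rightarrow> real" and k :: nat
  assumes "eps > 0" and "\<forall>i\<in>{1..k}. b i > 0"
  shows "(\<forall>yt. infnorm (yt - y) \<le> eps \<and> (\<Union>j. S_set a b k j (yt $ j)) = {1..k}
              \<longrightarrow> feasible_sol eps y a b k yt)
       \<and> ((\<exists>yt. feasible_sol eps y a b k yt)
              \<longrightarrow> (\<exists>p\<in>P_grid eps y a b k. feasible_sol eps y a b k p))"
proof (intro conjI allI impI)
  fix yt :: "real^'d"
  assume h: "infnorm (yt - y) \<le> eps \<and> (\<Union>j. S_set a b k j (yt $ j)) = {1..k}"
  show "feasible_sol eps y a b k yt"
    unfolding feasible_sol_def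
  proof (intro conjI ballI)
    show "infnorm (yt - y) \<le> eps" using h by simp
    fix i assume "i \<in> {1..k}"
    then obtain j where "i \<in> S_set a b k j (yt $ j)" using h by blast
    then have "b i \<le> \<bar>(yt - a i) $ j\<bar>" by (simp add: S_set_def)
    then show "b i \<le> infnorm (yt - a i)"
      using component_le_infnorm_cart order_trans by blast
  qed
next
  assume "\<exists>yt. feasible_sol eps y a b k yt"
  then obtain yt where yt: "feasible_sol eps y a b k yt" by blast
  define E where "E j = (\<Union>i\<in>{1..k}. {a i $ j - b i, a i $ j + b i})" for j
  have PE: "P_coord eps y a b k j = (if E j \<inter> {y$j-eps..y$j+eps} = {} then {y$j}
     else E j \<inter> {y$j-eps..y$j+eps})" for j
    unfolding P_coord_def E_def Let_def by (simp add: UN_extend_simps(4)[symmetric])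
  have "\<forall>j. \<exists>p. p \<in> P_coord eps y a b k j \<and> (\<forall>e\<in>E j. \<not>(p<e \<and> e\<le>yt$j) \<and> \<not>(yt$j\<le>e \<and> e<p))"
  proof
    fix j
    have "\<bar>yt$j - y$j\<bar> \<le> eps" using yt unfolding feasible_sol_def infnorm_le_cart by auto
    moreover have "finite (E j)" unfolding E_def by auto
    ultimately show "\<exists>p. p \<in> P_coord eps y a b k j \<and> (\<forall>e\<in>E j. \<not>(p<e \<and> e\<le>yt$j) \<and> \<not>(yt$j\<le>e \<and> e<p))"
      unfolding PE using coord_choice by blast
  qed
  then obtain f where f: "\<And>j. f j \<in> P_coord eps y a b k j \<and> (\<forall>e\<in>E j. \<not>(f j<e \<and> e\<le>yt$j) \<and> \<not>(yt$j\<le>e \<and> e<f j))"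
    by metis
  define p where "p = (\<chi> j. f j)"
  have pP: "p \<in> P_grid eps y a b k" unfolding P_grid_def p_def using f by simp
  have "feasible_sol eps y a b k p"
    unfolding feasible_sol_def
  proof (intro conjI ballI)
    have "\<bar>p$j - y$j\<bar> \<le> eps" for j
    proof -
      have "f j \<in> (if E j \<inter> {y$j-eps..y$j+eps} = {} then {y$j}
        else E j \<inter> {y$j-eps..y$j+eps})" using f PE by metis
      then have "f j \<in> {y$j-eps..y$j+eps}" using assms(1) by (auto split: if_splits)
      then show ?thesis unfolding p_def by auto
    qed
    then show "infnorm (p - y) \<le> eps" unfolding infnorm_le_cart by simp
    fix i assume i: "i \<in> {1..k}"
    then have "b i \<le> infnorm (yt - a i)" using yt unfolding feasible_sol_def by auto
    moreover obtain j where j: "infnorm (yt - a i) = \<bar>(yt - a i)$j\<bar>" using infnorm_attained by blast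
    ultimately have hb: "b i \<le> \<bar>yt$j - a i$j\<bar>" by simp
    have e1: "a i $ j - b i \<in> E j" and e2: "a i $ j + b i \<in> E j" using i unfolding E_def by auto
    have "b i \<le> \<bar>f j - a i$j\<bar>"
      using hb f[of j] e1 e2 by (smt (verit))
    then have "b i \<le> \<bar>(p - a i)$j\<bar>" unfolding p_def by simp
    then show "b i \<le> infnorm (p - a i)"
      using component_le_infnorm_cart order_trans by blast
  qed
  then show "\<exists>p\<in>P_grid eps y a b k. feasible_sol eps y a b k p" using pP by blast
qed

end
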